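(* Let $A$ be a noetherian ring and $M$ a finitely generated $A$-module. For each prime $\mathfrak{p}\subset A$, let an element $s(\mathfrak{p})\in M_{\mathfrak{p}}$ be given, such that whenever $\mathfrak{p}\subset \mathfrak{q}$ are primes we have $s(\mathfrak{p}) = 1\otimes s(\mathfrak{q}) \in A_{\mathfrak{p}}\otimes_{A_{\mathfrak{q}}} M_{\mathfrak{q}} = M_{\mathfrak{p}}$. Then there exists a unique $v\in M$ such that $i_{\mathfrak{p}}(v) = s(\mathfrak{p})$ for each prime $\mathfrak{p}$, where $i_{\mathfrak{p}}: M\to M_{\mathfrak{p}}$, $w\mapsto w/1$, is the localization map. *)

theory Defs
  imports "HOL-Algebra.Algebra"
begin

definition fin_gen_module :: "('a, 'r) ring_scheme \<Rightarrow> ('a, 'b, 'm) module_scheme \<Rightarrow> bool" where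
  "fin_gen_module R M \<longleftrightarrow>
     (\<exists>G \<subseteq> carrier M. finite G \<and>
        (\<forall>x \<in> carrier M. \<exists>c \<in> G \<rightarrow> carrier R. x = (\<Oplus>\<^bsub>M\<^esub> g\<in>G. c g \<odot>\<^bsub>M\<^esub> g)))"

text \<open>Localization of the module M at the multiplicative set S:
  pairs (m, s) standing for m/s, modulo (m,s) ~ (m',s') iff u(s'm - s m') = 0 for some u in S.\<close>
definition loc_rel :: "('a, 'r) ring_scheme \<Rightarrow> ('a, 'b, 'm) module_scheme \<Rightarrow> 'a set \<Rightarrow> (('b \<times> 'a) \<times> ('b \<times> 'a)) set" where
  "loc_rel R M S = {((m, s), (m', s')). m \<in> carrier M \<and> s \<in> S \<and> m' \<in> carrier M \<and> s' \<in> S \<and>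
      (\<exists>u \<in> S. u \<odot>\<^bsub>M\<^esub> ((s' \<odot>\<^bsub>M\<^esub> m) \<ominus>\<^bsub>M\<^esub> (s \<odot>\<^bsub>M\<^esub> m')) = \<zero>\<^bsub>M\<^esub>)}"

definition localization :: "('a, 'r) ring_scheme \<Rightarrow> ('a, 'b, 'm) module_scheme \<Rightarrow> 'a set \<Rightarrow> ('b \<times> 'a) set set" where
  "localization R M P = (carrier M \<times> (carrier R - P)) // loc_rel R M (carrier R - P)"

definition loc_map :: "('a, 'r) ring_scheme \<Rightarrow> ('a, 'b, 'm) module_scheme \<Rightarrow> 'a set \<Rightarrow> 'b \<Rightarrow> ('b \<times> 'a) set" where
  "loc_map R M P w = loc_rel R M (carrier R - P) `` {(w, \<one>\<^bsub>R\<^esub>)}"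

text \<open>For P \<subseteq> Q, the canonical map M_Q \<rightarrow> M_P = A_P \<otimes>_{A_Q} M_Q, x \<mapsto> 1 \<otimes> x,
  i.e. m/s \<mapsto> m/s: a class of M_Q is sent to the class in M_P of any representative.\<close>
definition loc_restrict :: "('a, 'r) ring_scheme \<Rightarrow> ('a, 'b, 'm) module_scheme \<Rightarrow> 'a set \<Rightarrow> ('b \<times> 'a) set \<Rightarrow> ('b \<times> 'a) set" where
  "loc_restrict R M P c = loc_rel R M (carrier R - P) `` c"

end

theory Submission
  imports Defs
begin

lemma noeth_max:
  assumes "noetherian_ring R" "Is \<noteq> {}" "\<And>I. I \<in> Is \<Longrightarrow> ideal I R"
  shows "\<exists>I\<in>Is. \<forall>J\<in>Is. I \<subseteq> J \<longrightarrow> J = I"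
proof (rule subset_Zorn)
  fix C assume C: "subset.chain Is C"
  show "\<exists>U\<in>Is. \<forall>Y\<in>C. Y \<subseteq> U"
  proof (cases "C = {}")
    case True then show ?thesis using assms(2) by auto
  next
    case False
    have "subset.chain {I. ideal I R} C"
      using C assms(3) unfolding subset.chain_def by auto
    then have "\<Union>C \<in> C" using noetherian_ring.ideal_chain_is_trivial[OF assms(1) False] by blast
    then show ?thesis using C unfolding subset.chain_def by auto
  qed
qed

lemma (in cring) my_idealI:
  assumes "I \<subseteq> carrier R" "\<zero> \<in> I" "\<And>a b. a \<in> I \<Longrightarrow> b \<in> I \<Longrightarrow> a \<oplus> b \<in> I"
    "\<And>r a. r \<in> carrier R \<Longrightarrow> a \<in> I \<Longrightarrow> r \<otimes> a \<in> I"
  shows "ideal I R"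
proof (rule idealI)
  show "ring R" by (rule ring_axioms)
  show "subgroup I (add_monoid R)"
  proof (rule add.subgroupI)
    show "I \<subseteq> carrier R" using assms(1) by simp
    show "I \<noteq> {}" using assms(2) by auto
    fix a assume a: "a \<in> I"
    have "\<ominus> a = (\<ominus> \<one>) \<otimes> a" using a assms(1) by (simp add: l_minus subsetD)
    then show "\<ominus> a \<in> I" using assms(4)[of "\<ominus>\<one>" a] a by simp
  next
    fix a b assume "a \<in> I" "b \<in> I" then show "a \<oplus> b \<in> I" using assms(3) by simp
  qed
  fix a x assume "a \<in> I" "x \<in> carrier R"
  then show "x \<otimes> a \<in> I" using assms(4) by blast
  then show "a \<otimes> x \<in> I" using \<open>a \<in> I\<close> \<open>x \<in> carrier R\<close> assms(1) m_comm by (metis subsetD)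
qed

definition colon :: "('a, 'r) ring_scheme \<Rightarrow> ('a, 'b, 'm) module_scheme \<Rightarrow> 'b set \<Rightarrow> 'b \<Rightarrow> 'a set" where
  "colon R M N z = {a \<in> carrier R. a \<odot>\<^bsub>M\<^esub> z \<in> N}"

definition subm :: "('a, 'r) ring_scheme \<Rightarrow> ('a, 'b, 'm) module_scheme \<Rightarrow> 'b set \<Rightarrow> bool" where
  "subm R M N \<longleftrightarrow> N \<subseteq> carrier M \<and> \<zero>\<^bsub>M\<^esub> \<in> N \<and> (\<forall>a\<in>N. \<forall>b\<in>N. a \<oplus>\<^bsub>M\<^esub> b \<in> N)
     \<and> (\<forall>r\<in>carrier R. \<forall>a\<in>N. r \<odot>\<^bsub>M\<^esub> a \<in> N)"

definition mset :: "('a, 'r) ring_scheme \<Rightarrow> 'a set \<Rightarrow> bool" where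
  "mset R T \<longleftrightarrow> T \<subseteq> carrier R \<and> \<one>\<^bsub>R\<^esub> \<in> T \<and> (\<forall>a\<in>T. \<forall>b\<in>T. a \<otimes>\<^bsub>R\<^esub> b \<in> T)"

inductive_set spn :: "('a, 'r) ring_scheme \<Rightarrow> ('a, 'b, 'm) module_scheme \<Rightarrow> 'b set \<Rightarrow> 'b set"
  for R M G where
  spn_zero: "\<zero>\<^bsub>M\<^esub> \<in> spn R M G"
| spn_gen: "g \<in> G \<Longrightarrow> g \<in> spn R M G"
| spn_add: "a \<in> spn R M G \<Longrightarrow> b \<in> spn R M G \<Longrightarrow> a \<oplus>\<^bsub>M\<^esub> b \<in> spn R M G"
| spn_smult: "r \<in> carrier R \<Longrightarrow> a \<in> spn R M G \<Longrightarrow> r \<odot>\<^bsub>M\<^esub> a \<in> spn R M G"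

context module
begin

lemma smult_smult: "a \<in> carrier R \<Longrightarrow> b \<in> carrier R \<Longrightarrow> z \<in> carrier M \<Longrightarrow>
  a \<odot>\<^bsub>M\<^esub> (b \<odot>\<^bsub>M\<^esub> z) = (a \<otimes> b) \<odot>\<^bsub>M\<^esub> z"
  by (simp add: smult_assoc1)

lemma subm_zero: "subm R M {\<zero>\<^bsub>M\<^esub>}"
  unfolding subm_def by auto

lemma colon_ideal:
  assumes "subm R M N" "z \<in> carrier M"
  shows "ideal (colon R M N z) R"
proof (rule my_idealI)
  show "colon R M N z \<subseteq> carrier R" unfolding colon_def by auto
  show "\<zero> \<in> colon R M N z" using assms unfolding colon_def subm_def by auto
  fix a b assume "a \<in> colon R M N z" "b \<in> colon R M N z"
  then show "a \<oplus> b \<in> colon R M N z" using assms unfolding colon_def subm_def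
    by (auto simp: smult_l_distr)
next
  fix r a assume "r \<in> carrier R" "a \<in> colon R M N z"
  then show "r \<otimes> a \<in> colon R M N z" using assms unfolding colon_def subm_def
    by (auto simp: smult_assoc1)
qed

lemma smult_diff_eq:
  assumes "u \<in> carrier R" "a \<in> carrier M" "b \<in> carrier M"
  shows "(u \<odot>\<^bsub>M\<^esub> (a \<ominus>\<^bsub>M\<^esub> b) = \<zero>\<^bsub>M\<^esub>) = (u \<odot>\<^bsub>M\<^esub> a = u \<odot>\<^bsub>M\<^esub> b)"
proof -
  have "u \<odot>\<^bsub>M\<^esub> (a \<ominus>\<^bsub>M\<^esub> b) = u \<odot>\<^bsub>M\<^esub> a \<ominus>\<^bsub>M\<^esub> u \<odot>\<^bsub>M\<^esub> b"
    using assms by (simp add: M.minus_eq smult_r_distr smult_r_minus)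
  moreover have "\<And>x y. x \<in> carrier M \<Longrightarrow> y \<in> carrier M \<Longrightarrow> (x \<ominus>\<^bsub>M\<^esub> y = \<zero>\<^bsub>M\<^esub>) = (x = y)"
    by (metis M.add.inv_closed M.add.inv_solve_right M.l_zero M.minus_eq M.r_neg M.zero_closed)
  ultimately show ?thesis using assms by simp
qed

lemma max_colon_prime:
  assumes noeth: "noetherian_ring R" and N: "subm R M N" and T: "mset R T"
    and y: "y \<in> carrier M" and yT: "colon R M N y \<inter> T = {}"
  shows "\<exists>Q z. primeideal Q R \<and> Q \<inter> T = {} \<and> z \<in> carrier M \<and> Q = colon R M N z
     \<and> (\<forall>u\<in>carrier R - Q. u \<odot>\<^bsub>M\<^esub> y \<notin> N)"
proof -
  define Fam where "Fam = {colon R M N (r \<odot>\<^bsub>M\<^esub> y) | r. r \<in> carrier R \<and> colon R M N (r \<odot>\<^bsub>M\<^esub> y) \<inter> T = {}}"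
  have TR: "T \<subseteq> carrier R" and one: "\<one> \<in> T" and Tm: "\<And>a b. a \<in> T \<Longrightarrow> b \<in> T \<Longrightarrow> a \<otimes> b \<in> T"
    using T unfolding mset_def by auto
  have NM: "N \<subseteq> carrier M" and Nsm: "\<And>r a. r \<in> carrier R \<Longrightarrow> a \<in> N \<Longrightarrow> r \<odot>\<^bsub>M\<^esub> a \<in> N"
    using N unfolding subm_def by auto
  have "colon R M N (\<one> \<odot>\<^bsub>M\<^esub> y) \<in> Fam" unfolding Fam_def using yT y by (auto intro!: exI[of _ "\<one>"])
  then have ne: "Fam \<noteq> {}" by auto
  have idl: "\<And>I. I \<in> Fam \<Longrightarrow> ideal I R" unfolding Fam_def using colon_ideal[OF N] y by auto
  obtain Q where QF: "Q \<in> Fam" and Qmax: "\<And>J. J \<in> Fam \<Longrightarrow> Q \<subseteq> J \<Longrightarrow> J = Q"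
    using noeth_max[OF noeth ne idl] by blast
  obtain r where r: "r \<in> carrier R" and Qdef: "Q = colon R M N (r \<odot>\<^bsub>M\<^esub> y)" and QT: "Q \<inter> T = {}"
    using QF unfolding Fam_def by auto
  have memQ: "\<And>a. a \<in> Q \<longleftrightarrow> a \<in> carrier R \<and> (a \<otimes> r) \<odot>\<^bsub>M\<^esub> y \<in> N"
    unfolding Qdef colon_def using r y by (auto simp: smult_assoc1)
  have idQ: "ideal Q R" using idl QF by auto
  have prime: "primeideal Q R"
  proof (rule primeidealI)
    show "ideal Q R" by fact
    show "cring R" by (rule is_cring)
    show "carrier R \<noteq> Q" using one QT TR by auto
    fix a b assume a: "a \<in> carrier R" and b: "b \<in> carrier R" and ab: "a \<otimes> b \<in> Q"
    show "a \<in> Q \<or> b \<in> Q"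
    proof (rule ccontr)
      assume nab: "\<not> (a \<in> Q \<or> b \<in> Q)"
      define Q' where "Q' = colon R M N ((a \<otimes> r) \<odot>\<^bsub>M\<^esub> y)"
      have memQ': "\<And>c. c \<in> Q' \<longleftrightarrow> c \<in> carrier R \<and> (c \<otimes> a \<otimes> r) \<odot>\<^bsub>M\<^esub> y \<in> N"
        unfolding Q'_def colon_def using r y a by (auto simp: smult_assoc1 m_assoc)
      have QQ': "Q \<subseteq> Q'"
      proof
        fix c assume "c \<in> Q"
        then have c: "c \<in> carrier R" "(c \<otimes> r) \<odot>\<^bsub>M\<^esub> y \<in> N" using memQ by auto
        then have "a \<odot>\<^bsub>M\<^esub> ((c \<otimes> r) \<odot>\<^bsub>M\<^esub> y) \<in> N" using Nsm a by auto
        then have "(c \<otimes> a \<otimes> r) \<odot>\<^bsub>M\<^esub> y \<in> N" using a c r y by (simp add: smult_assoc1[symmetric] m_ac)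
        then show "c \<in> Q'" using memQ' c by auto
      qed
      have bQ': "b \<in> Q'"
      proof -
        have "((a \<otimes> b) \<otimes> r) \<odot>\<^bsub>M\<^esub> y \<in> N" using memQ ab by auto
        then show ?thesis using memQ' a b r by (simp add: m_ac)
      qed
      show False
      proof (cases "Q' \<inter> T = {}")
        case True
        then have "Q' \<in> Fam" unfolding Fam_def Q'_def using a r by auto
        then have "Q' = Q" using Qmax QQ' by auto
        then show False using nab bQ' by auto
      next
        case False
        then obtain w where w: "w \<in> Q'" "w \<in> T" by auto
        have wR: "w \<in> carrier R" using w TR by auto
        have wa: "(w \<otimes> a \<otimes> r) \<odot>\<^bsub>M\<^esub> y \<in> N" using w memQ' by auto
        define Q'' where "Q'' = colon R M N ((w \<otimes> r) \<odot>\<^bsub>M\<^esub> y)"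
        have memQ'': "\<And>c. c \<in> Q'' \<longleftrightarrow> c \<in> carrier R \<and> (c \<otimes> w \<otimes> r) \<odot>\<^bsub>M\<^esub> y \<in> N"
          unfolding Q''_def colon_def using r y wR by (auto simp: smult_assoc1 m_assoc)
        have Q''T: "Q'' \<inter> T = {}"
        proof (rule ccontr)
          assume "Q'' \<inter> T \<noteq> {}"
          then obtain v where v: "v \<in> Q''" "v \<in> T" by auto
          then have "v \<otimes> w \<in> Q" using memQ memQ'' TR wR by auto
          moreover have "v \<otimes> w \<in> T" using Tm v w by auto
          ultimately show False using QT by auto
        qed
        have "Q \<subseteq> Q''"
        proof
          fix c assume "c \<in> Q"
          then have c: "c \<in> carrier R" "(c \<otimes> r) \<odot>\<^bsub>M\<^esub> y \<in> N" using memQ by auto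
          then have "w \<odot>\<^bsub>M\<^esub> ((c \<otimes> r) \<odot>\<^bsub>M\<^esub> y) \<in> N" using Nsm wR by auto
          then have "(c \<otimes> w \<otimes> r) \<odot>\<^bsub>M\<^esub> y \<in> N" using wR c r y by (simp add: smult_assoc1[symmetric] m_ac)
          then show "c \<in> Q''" using memQ'' c by auto
        qed
        moreover have "Q'' \<in> Fam" unfolding Fam_def Q''_def using wR r Q''T Q''_def by auto
        ultimately have "Q'' = Q" using Qmax by auto
        moreover have "a \<in> Q''" using memQ'' wa a wR r by (simp add: m_ac)
        ultimately show False using nab by auto
      qed
    qed
  qed
  have "\<forall>u\<in>carrier R - Q. u \<odot>\<^bsub>M\<^esub> y \<notin> N"
  proof (intro ballI notI)
    fix u assume u: "u \<in> carrier R - Q" and uy: "u \<odot>\<^bsub>M\<^esub> y \<in> N"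
    then have "r \<odot>\<^bsub>M\<^esub> (u \<odot>\<^bsub>M\<^esub> y) \<in> N" using Nsm r by auto
    then have "(u \<otimes> r) \<odot>\<^bsub>M\<^esub> y \<in> N" using u r y by (simp add: smult_assoc1 m_comm)
    then show False using u memQ by auto
  qed
  then show ?thesis using prime QT Qdef r y by (intro exI[of _ Q] exI[of _ "r \<odot>\<^bsub>M\<^esub> y"]) auto
qed

lemma spn_carrier: "G \<subseteq> carrier M \<Longrightarrow> spn R M G \<subseteq> carrier M"
proof
  fix x assume G: "G \<subseteq> carrier M" and x: "x \<in> spn R M G"
  from x show "x \<in> carrier M" by (induction rule: spn.induct) (use G in auto)
qed

lemma subm_neg: "subm R M N \<Longrightarrow> a \<in> N \<Longrightarrow> \<ominus>\<^bsub>M\<^esub> a \<in> N"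
proof -
  assume N: "subm R M N" and a: "a \<in> N"
  then have aM: "a \<in> carrier M" unfolding subm_def by auto
  have "(\<ominus> \<one>) \<odot>\<^bsub>M\<^esub> a = \<ominus>\<^bsub>M\<^esub> a" using aM by (simp add: smult_l_minus)
  moreover have "(\<ominus> \<one>) \<odot>\<^bsub>M\<^esub> a \<in> N" using N a unfolding subm_def by auto
  ultimately show ?thesis by simp
qed

lemma spn_subm: "G \<subseteq> carrier M \<Longrightarrow> subm R M (spn R M G)"
  unfolding subm_def using spn_carrier by (auto intro: spn.intros)

lemma subm_Int: "subm R M A \<Longrightarrow> subm R M B \<Longrightarrow> subm R M (A \<inter> B)"
  unfolding subm_def by auto

lemma spn_mono: "G \<subseteq> H \<Longrightarrow> spn R M G \<subseteq> spn R M H"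
proof
  fix x assume G: "G \<subseteq> H" and x: "x \<in> spn R M G"
  from x show "x \<in> spn R M H" by (induction rule: spn.induct) (use G in \<open>auto intro: spn.intros\<close>)
qed

lemma spn_empty: "spn R M {} = {\<zero>\<^bsub>M\<^esub>}"
proof
  show "spn R M {} \<subseteq> {\<zero>\<^bsub>M\<^esub>}"
  proof
    fix x assume "x \<in> spn R M {}"
    then show "x \<in> {\<zero>\<^bsub>M\<^esub>}" by (induction rule: spn.induct) auto
  qed
qed (auto intro: spn.intros)

lemma spn_insert:
  assumes G: "G \<subseteq> carrier M" and g: "g \<in> carrier M" and x: "x \<in> spn R M (insert g G)"
  shows "\<exists>r\<in>carrier R. \<exists>w\<in>spn R M G. x = r \<odot>\<^bsub>M\<^esub> g \<oplus>\<^bsub>M\<^esub> w"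
  using x
proof (induction rule: spn.induct)
  case spn_zero
  show ?case using g by (intro bexI[of _ \<zero>] bexI[of _ "\<zero>\<^bsub>M\<^esub>"]) (auto intro: spn.intros)
next
  case (spn_gen h)
  show ?case
  proof (cases "h = g")
    case True
    then show ?thesis using g by (intro bexI[of _ \<one>] bexI[of _ "\<zero>\<^bsub>M\<^esub>"]) (auto intro: spn.intros)
  next
    case False
    then have "h \<in> G" using spn_gen by auto
    then show ?thesis using g G by (intro bexI[of _ \<zero>] bexI[of _ h]) (auto intro: spn.intros)
  qed
next
  case (spn_add a b)
  then obtain r1 w1 r2 w2 where r: "r1 \<in> carrier R" "w1 \<in> spn R M G" "a = r1 \<odot>\<^bsub>M\<^esub> g \<oplus>\<^bsub>M\<^esub> w1"
    "r2 \<in> carrier R" "w2 \<in> spn R M G" "b = r2 \<odot>\<^bsub>M\<^esub> g \<oplus>\<^bsub>M\<^esub> w2" by blast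
  have w: "w1 \<in> carrier M" "w2 \<in> carrier M" using r spn_carrier[OF G] by auto
  have "a \<oplus>\<^bsub>M\<^esub> b = (r1 \<oplus> r2) \<odot>\<^bsub>M\<^esub> g \<oplus>\<^bsub>M\<^esub> (w1 \<oplus>\<^bsub>M\<^esub> w2)"
    using r w g by (simp add: smult_l_distr M.a_ac)
  then show ?case using r by (intro bexI[of _ "r1 \<oplus> r2"] bexI[of _ "w1 \<oplus>\<^bsub>M\<^esub> w2"]) (auto intro: spn.intros)
next
  case (spn_smult c a)
  then obtain r1 w1 where r: "r1 \<in> carrier R" "w1 \<in> spn R M G" "a = r1 \<odot>\<^bsub>M\<^esub> g \<oplus>\<^bsub>M\<^esub> w1" by blast
  have w: "w1 \<in> carrier M" using r spn_carrier[OF G] by auto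
  have "c \<odot>\<^bsub>M\<^esub> a = (c \<otimes> r1) \<odot>\<^bsub>M\<^esub> g \<oplus>\<^bsub>M\<^esub> (c \<odot>\<^bsub>M\<^esub> w1)"
    using r w g spn_smult by (simp add: smult_r_distr smult_assoc1)
  then show ?case using r spn_smult by (intro bexI[of _ "c \<otimes> r1"] bexI[of _ "c \<odot>\<^bsub>M\<^esub> w1"]) (auto intro: spn.intros)
qed

lemma add_neg_cancel:
  "a \<in> carrier M \<Longrightarrow> b \<in> carrier M \<Longrightarrow> c \<in> carrier M \<Longrightarrow>
   (a \<oplus>\<^bsub>M\<^esub> b) \<oplus>\<^bsub>M\<^esub> \<ominus>\<^bsub>M\<^esub> (a \<oplus>\<^bsub>M\<^esub> c) = b \<oplus>\<^bsub>M\<^esub> \<ominus>\<^bsub>M\<^esub> c"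
  by (metis (full_types) M.add.inv_closed M.add.inv_mult_group M.add.m_assoc M.add.m_comm M.minus_closed M.minus_eq M.r_neg2)

lemma add_neg_back:
  "a \<in> carrier M \<Longrightarrow> b \<in> carrier M \<Longrightarrow> a = (a \<oplus>\<^bsub>M\<^esub> \<ominus>\<^bsub>M\<^esub> b) \<oplus>\<^bsub>M\<^esub> b"
  by (simp add: M.a_assoc M.l_neg)

lemma acc_spn:
  assumes noeth: "noetherian_ring R" and fin: "finite G"
  shows "G \<subseteq> carrier M \<Longrightarrow> Fam \<noteq> {} \<Longrightarrow> (\<And>N. N \<in> Fam \<Longrightarrow> subm R M N \<and> N \<subseteq> spn R M G)
    \<Longrightarrow> \<exists>N\<in>Fam. \<forall>N'\<in>Fam. N \<subseteq> N' \<longrightarrow> N' = N"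
  using fin
proof (induction G arbitrary: Fam rule: finite_induct)
  case empty
  then obtain N where N: "N \<in> Fam" by auto
  have "N = {\<zero>\<^bsub>M\<^esub>}" if "N \<in> Fam" for N
  proof -
    have "subm R M N" "N \<subseteq> {\<zero>\<^bsub>M\<^esub>}" using empty(3)[OF that] spn_empty by auto
    then show ?thesis unfolding subm_def by auto
  qed
  then show ?case using N by blast
next
  case (insert g G)
  have GM: "G \<subseteq> carrier M" and g: "g \<in> carrier M" using insert by auto
  define I where "I N = {r \<in> carrier R. \<exists>w\<in>spn R M G. r \<odot>\<^bsub>M\<^esub> g \<oplus>\<^bsub>M\<^esub> w \<in> N}" for N
  have spnGM: "spn R M G \<subseteq> carrier M" using spn_carrier[OF GM] .
  have Iideal: "ideal (I N) R" if N: "subm R M N" for N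
  proof (rule my_idealI)
    show "I N \<subseteq> carrier R" unfolding I_def by auto
    show "\<zero> \<in> I N" unfolding I_def using N g unfolding subm_def by (auto intro!: bexI[of _ "\<zero>\<^bsub>M\<^esub>"] spn_zero)
  next
    fix a b assume "a \<in> I N" "b \<in> I N"
    then obtain w1 w2 where w: "a \<in> carrier R" "w1 \<in> spn R M G" "a \<odot>\<^bsub>M\<^esub> g \<oplus>\<^bsub>M\<^esub> w1 \<in> N"
      "b \<in> carrier R" "w2 \<in> spn R M G" "b \<odot>\<^bsub>M\<^esub> g \<oplus>\<^bsub>M\<^esub> w2 \<in> N" unfolding I_def by blast
    have wM: "w1 \<in> carrier M" "w2 \<in> carrier M" using w spnGM by auto
    have "(a \<odot>\<^bsub>M\<^esub> g \<oplus>\<^bsub>M\<^esub> w1) \<oplus>\<^bsub>M\<^esub> (b \<odot>\<^bsub>M\<^esub> g \<oplus>\<^bsub>M\<^esub> w2) = (a \<oplus> b) \<odot>\<^bsub>M\<^esub> g \<oplus>\<^bsub>M\<^esub> (w1 \<oplus>\<^bsub>M\<^esub> w2)"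
      using w wM g by (simp add: smult_l_distr M.add.m_assoc M.add.m_lcomm)
    moreover have "(a \<odot>\<^bsub>M\<^esub> g \<oplus>\<^bsub>M\<^esub> w1) \<oplus>\<^bsub>M\<^esub> (b \<odot>\<^bsub>M\<^esub> g \<oplus>\<^bsub>M\<^esub> w2) \<in> N" using N w unfolding subm_def by auto
    ultimately show "a \<oplus> b \<in> I N" unfolding I_def using w by (auto intro!: bexI[of _ "w1 \<oplus>\<^bsub>M\<^esub> w2"] spn_add)
  next
    fix c a assume c: "c \<in> carrier R" and "a \<in> I N"
    then obtain w where w: "a \<in> carrier R" "w \<in> spn R M G" "a \<odot>\<^bsub>M\<^esub> g \<oplus>\<^bsub>M\<^esub> w \<in> N" unfolding I_def by blast
    have wM: "w \<in> carrier M" using w spnGM by auto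
    have "c \<odot>\<^bsub>M\<^esub> (a \<odot>\<^bsub>M\<^esub> g \<oplus>\<^bsub>M\<^esub> w) = (c \<otimes> a) \<odot>\<^bsub>M\<^esub> g \<oplus>\<^bsub>M\<^esub> c \<odot>\<^bsub>M\<^esub> w"
      using w wM g c by (simp add: smult_r_distr smult_assoc1)
    moreover have "c \<odot>\<^bsub>M\<^esub> (a \<odot>\<^bsub>M\<^esub> g \<oplus>\<^bsub>M\<^esub> w) \<in> N" using N w c unfolding subm_def by auto
    ultimately show "c \<otimes> a \<in> I N" unfolding I_def using w c by (auto intro!: bexI[of _ "c \<odot>\<^bsub>M\<^esub> w"] spn_smult)
  qed
  have Imono: "N \<subseteq> N' \<Longrightarrow> I N \<subseteq> I N'" for N N' unfolding I_def by auto
  have ne1: "I ` Fam \<noteq> {}" using insert by auto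
  have idl: "\<And>J. J \<in> I ` Fam \<Longrightarrow> ideal J R" using Iideal insert(6) by auto
  obtain J0 where J0: "J0 \<in> I ` Fam" and J0max: "\<And>J. J \<in> I ` Fam \<Longrightarrow> J0 \<subseteq> J \<Longrightarrow> J = J0"
    using noeth_max[OF noeth ne1 idl] by metis
  obtain N1 where N1: "N1 \<in> Fam" and "J0 = I N1" using J0 by auto
  then have N1max: "\<And>J. J \<in> I ` Fam \<Longrightarrow> I N1 \<subseteq> J \<Longrightarrow> J = I N1" using J0max by auto
  define Fam' where "Fam' = {N \<in> Fam. I N = I N1}"
  define Gam where "Gam = (\<lambda>N. N \<inter> spn R M G) ` Fam'"
  have ne2: "Gam \<noteq> {}" unfolding Gam_def Fam'_def using N1 by auto
  have sub2: "\<And>K. K \<in> Gam \<Longrightarrow> subm R M K \<and> K \<subseteq> spn R M G"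
    unfolding Gam_def Fam'_def using insert(6) subm_Int spn_subm[OF GM] by auto
  obtain K where K: "K \<in> Gam" and Kmax: "\<And>K'. K' \<in> Gam \<Longrightarrow> K \<subseteq> K' \<Longrightarrow> K' = K"
    using insert.IH[OF GM ne2 sub2] by metis
  obtain N2 where N2: "N2 \<in> Fam'" and KN2: "K = N2 \<inter> spn R M G" using K unfolding Gam_def by auto
  show ?case
  proof (intro bexI[of _ N2] ballI impI)
    show "N2 \<in> Fam" using N2 unfolding Fam'_def by auto
    fix N' assume N': "N' \<in> Fam" and sub: "N2 \<subseteq> N'"
    have smN': "subm R M N'" and N'sp: "N' \<subseteq> spn R M (insert g G)" using insert(6) N' by auto
    have "I N2 \<subseteq> I N'" using Imono sub .
    then have "I N' = I N1" using N1max[of "I N'"] N' N2 unfolding Fam'_def by auto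
    then have N'F: "N' \<in> Fam'" unfolding Fam'_def using N' by auto
    then have "N' \<inter> spn R M G = K" using Kmax[of "N' \<inter> spn R M G"] sub KN2 unfolding Gam_def by auto
    then have inter: "N' \<inter> spn R M G = N2 \<inter> spn R M G" using KN2 by simp
    have IN: "I N' = I N2" using N'F N2 unfolding Fam'_def by auto
    have smN2: "subm R M N2" using insert(6) N2 unfolding Fam'_def by auto
    show "N' = N2"
    proof
      show "N' \<subseteq> N2"
      proof
        fix x assume xN': "x \<in> N'"
        have xs: "x \<in> spn R M (insert g G)" using N'sp xN' by auto
        from spn_insert[OF GM g xs] obtain r w where r: "r \<in> carrier R" "w \<in> spn R M G" "x = r \<odot>\<^bsub>M\<^esub> g \<oplus>\<^bsub>M\<^esub> w"
          by blast
        then have "r \<in> I N'" unfolding I_def using xN' by auto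
        then have "r \<in> I N2" using IN by simp
        then obtain w' where w': "w' \<in> spn R M G" "r \<odot>\<^bsub>M\<^esub> g \<oplus>\<^bsub>M\<^esub> w' \<in> N2" unfolding I_def by auto
        have wM: "w \<in> carrier M" "w' \<in> carrier M" using r w' spnGM by auto
        define d where "d = w \<oplus>\<^bsub>M\<^esub> \<ominus>\<^bsub>M\<^esub> w'"
        have "d \<in> spn R M G" unfolding d_def using spn_add[OF r(2) subm_neg[OF spn_subm[OF GM] w'(1)]] .
        moreover have deq: "d = x \<oplus>\<^bsub>M\<^esub> \<ominus>\<^bsub>M\<^esub> (r \<odot>\<^bsub>M\<^esub> g \<oplus>\<^bsub>M\<^esub> w')"
          unfolding d_def r(3) by (rule add_neg_cancel[symmetric]) (use wM r g in auto)
        have e: "r \<odot>\<^bsub>M\<^esub> g \<oplus>\<^bsub>M\<^esub> w' \<in> N'" using w'(2) sub by auto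
        have "d \<in> N'" using deq xN' subm_neg[OF smN' e] smN' unfolding subm_def by auto
        ultimately have "d \<in> N2" using inter by blast
        moreover have "x = d \<oplus>\<^bsub>M\<^esub> (r \<odot>\<^bsub>M\<^esub> g \<oplus>\<^bsub>M\<^esub> w')"
          unfolding deq by (rule add_neg_back) (use xN' e smN' in \<open>auto simp: subm_def\<close>)
        ultimately show "x \<in> N2" using w' smN2 unfolding subm_def by auto
      qed
    qed (rule sub)
  qed
qed

lemma finsum_in_spn:
  assumes "finite H" "H \<subseteq> G" "G \<subseteq> carrier M" "c \<in> H \<rightarrow> carrier R"
  shows "(\<Oplus>\<^bsub>M\<^esub> g\<in>H. c g \<odot>\<^bsub>M\<^esub> g) \<in> spn R M G"
  using assms
proof (induction H rule: finite_induct)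
  case empty
  then show ?case by (simp add: spn_zero)
next
  case (insert h H)
  have f: "(\<lambda>g. c g \<odot>\<^bsub>M\<^esub> g) \<in> H \<rightarrow> carrier M" "c h \<odot>\<^bsub>M\<^esub> h \<in> carrier M"
    using insert by auto
  have "(\<Oplus>\<^bsub>M\<^esub> g\<in>insert h H. c g \<odot>\<^bsub>M\<^esub> g) = c h \<odot>\<^bsub>M\<^esub> h \<oplus>\<^bsub>M\<^esub> (\<Oplus>\<^bsub>M\<^esub> g\<in>H. c g \<odot>\<^bsub>M\<^esub> g)"
    using M.finsum_insert[OF insert(1) insert(2) f] .
  moreover have "c h \<odot>\<^bsub>M\<^esub> h \<in> spn R M G" using insert by (intro spn_smult spn_gen) auto
  moreover have "(\<Oplus>\<^bsub>M\<^esub> g\<in>H. c g \<odot>\<^bsub>M\<^esub> g) \<in> spn R M G" using insert by auto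
  ultimately show ?case by (simp add: spn_add)
qed

lemma acc_M:
  assumes noeth: "noetherian_ring R" and fg: "fin_gen_module R M"
    and ne: "Fam \<noteq> {}" and sm: "\<And>N. N \<in> Fam \<Longrightarrow> subm R M N"
  shows "\<exists>N\<in>Fam. \<forall>N'\<in>Fam. N \<subseteq> N' \<longrightarrow> N' = N"
proof -
  obtain G where G: "G \<subseteq> carrier M" "finite G"
    and gen: "\<And>x. x \<in> carrier M \<Longrightarrow> \<exists>c \<in> G \<rightarrow> carrier R. x = (\<Oplus>\<^bsub>M\<^esub> g\<in>G. c g \<odot>\<^bsub>M\<^esub> g)"
    using fg unfolding fin_gen_module_def by blast
  have "carrier M \<subseteq> spn R M G"
  proof
    fix x assume "x \<in> carrier M"
    then obtain c where "c \<in> G \<rightarrow> carrier R" "x = (\<Oplus>\<^bsub>M\<^esub> g\<in>G. c g \<odot>\<^bsub>M\<^esub> g)" using gen by blast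
    then show "x \<in> spn R M G" using finsum_in_spn[OF G(2) order_refl G(1)] by simp
  qed
  then have "\<And>N. N \<in> Fam \<Longrightarrow> subm R M N \<and> N \<subseteq> spn R M G" using sm unfolding subm_def by blast
  then show ?thesis using acc_spn[OF noeth G(2) G(1) ne] by blast
qed

lemma subm_cancel:
  assumes N: "subm R M N" and u: "u \<in> N" and v: "v \<in> carrier M" and uv: "u \<oplus>\<^bsub>M\<^esub> v \<in> N"
  shows "v \<in> N"
proof -
  have uM: "u \<in> carrier M" using N u unfolding subm_def by auto
  have "v = \<ominus>\<^bsub>M\<^esub> u \<oplus>\<^bsub>M\<^esub> (u \<oplus>\<^bsub>M\<^esub> v)"
    using uM v by (simp add: M.a_assoc[symmetric] M.l_neg)
  moreover have "\<ominus>\<^bsub>M\<^esub> u \<in> N" using subm_neg[OF N u] .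
  ultimately show ?thesis using uv N unfolding subm_def by metis
qed

lemma prime_colon_carrier:
  assumes "primeideal Q R" shows "Q \<noteq> carrier R"
  using assms primeideal.I_notcarr by metis

lemma ass_finite_gen:
  assumes noeth: "noetherian_ring R" and fg: "fin_gen_module R M"
  shows "subm R M N0 \<Longrightarrow> finite {Q. primeideal Q R \<and> (\<exists>z\<in>carrier M. Q = colon R M N0 z)}"
proof (rule ccontr)
  define AssN where "AssN N = {Q. primeideal Q R \<and> (\<exists>z\<in>carrier M. Q = colon R M N z)}" for N
  define Fam where "Fam = {N. subm R M N \<and> infinite (AssN N)}"
  assume "subm R M N0" "infinite {Q. primeideal Q R \<and> (\<exists>z\<in>carrier M. Q = colon R M N0 z)}"
  then have "N0 \<in> Fam" unfolding Fam_def AssN_def by auto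
  then have "Fam \<noteq> {}" by auto
  then obtain N where NF: "N \<in> Fam" and Nmax: "\<And>N'. N' \<in> Fam \<Longrightarrow> N \<subseteq> N' \<Longrightarrow> N' = N"
    using acc_M[OF noeth fg, of Fam] unfolding Fam_def by blast
  have N: "subm R M N" and inf: "infinite (AssN N)" using NF unfolding Fam_def by auto
  have NM: "N \<subseteq> carrier M" using N unfolding subm_def by auto
  have Nsm: "\<And>r a. r \<in> carrier R \<Longrightarrow> a \<in> N \<Longrightarrow> r \<odot>\<^bsub>M\<^esub> a \<in> N"
    and Nadd: "\<And>a b. a \<in> N \<Longrightarrow> b \<in> N \<Longrightarrow> a \<oplus>\<^bsub>M\<^esub> b \<in> N" using N unfolding subm_def by auto
  have "N \<noteq> carrier M"
  proof
    assume "N = carrier M"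
    then have "\<And>z. z \<in> carrier M \<Longrightarrow> colon R M N z = carrier R" unfolding colon_def by auto
    then have "AssN N = {}" unfolding AssN_def using prime_colon_carrier by auto
    then show False using inf by simp
  qed
  then obtain y0 where y0: "y0 \<in> carrier M" "y0 \<notin> N" using NM by auto
  have T1: "mset R {\<one>}" unfolding mset_def by auto
  have "colon R M N y0 \<inter> {\<one>} = {}" using y0 unfolding colon_def by auto
  then obtain P y where P: "primeideal P R" "y \<in> carrier M" "P = colon R M N y"
    using max_colon_prime[OF noeth N T1 y0(1)] by blast
  have PR: "P \<subseteq> carrier R" unfolding P(3) colon_def by auto
  have yN: "y \<notin> N"
  proof
    assume "y \<in> N"
    then have "P = carrier R" unfolding P(3) colon_def using Nsm by auto
    then show False using prime_colon_carrier P(1) by auto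
  qed
  define N' where "N' = {n \<oplus>\<^bsub>M\<^esub> r \<odot>\<^bsub>M\<^esub> y | n r. n \<in> N \<and> r \<in> carrier R}"
  have N'sm: "subm R M N'"
  proof -
    have "N' \<subseteq> carrier M" unfolding N'_def using NM P(2) by auto
    moreover have "\<zero>\<^bsub>M\<^esub> \<in> N'" unfolding N'_def using N P(2) unfolding subm_def
      by (auto intro!: exI[of _ "\<zero>\<^bsub>M\<^esub>"] exI[of _ \<zero>])
    moreover have "a \<oplus>\<^bsub>M\<^esub> b \<in> N'" if hab: "a \<in> N'" "b \<in> N'" for a b
    proof -
      obtain n1 r1 n2 r2 where ab: "a = n1 \<oplus>\<^bsub>M\<^esub> r1 \<odot>\<^bsub>M\<^esub> y" "n1 \<in> N" "r1 \<in> carrier R"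
        "b = n2 \<oplus>\<^bsub>M\<^esub> r2 \<odot>\<^bsub>M\<^esub> y" "n2 \<in> N" "r2 \<in> carrier R" using hab unfolding N'_def by blast
      have nM: "n1 \<in> carrier M" "n2 \<in> carrier M" using ab NM by auto
      have "a \<oplus>\<^bsub>M\<^esub> b = (n1 \<oplus>\<^bsub>M\<^esub> n2) \<oplus>\<^bsub>M\<^esub> (r1 \<oplus> r2) \<odot>\<^bsub>M\<^esub> y"
        using ab nM P(2) by (simp add: smult_l_distr M.add.m_assoc M.add.m_lcomm)
      then show ?thesis unfolding N'_def using ab Nadd by blast
    qed
    moreover have "c \<odot>\<^bsub>M\<^esub> a \<in> N'" if hca: "c \<in> carrier R" "a \<in> N'" for c a
    proof -
      obtain n1 r1 where ab: "a = n1 \<oplus>\<^bsub>M\<^esub> r1 \<odot>\<^bsub>M\<^esub> y" "n1 \<in> N" "r1 \<in> carrier R"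
        using hca unfolding N'_def by blast
      have nM: "n1 \<in> carrier M" using ab NM by auto
      have "c \<odot>\<^bsub>M\<^esub> a = c \<odot>\<^bsub>M\<^esub> n1 \<oplus>\<^bsub>M\<^esub> (c \<otimes> r1) \<odot>\<^bsub>M\<^esub> y"
        using ab nM P(2) hca by (simp add: smult_r_distr smult_assoc1)
      then show ?thesis unfolding N'_def using ab Nsm hca by blast
    qed
    ultimately show ?thesis unfolding subm_def by blast
  qed
  have NN': "N \<subseteq> N'"
  proof
    fix n assume "n \<in> N"
    moreover have "n = n \<oplus>\<^bsub>M\<^esub> \<zero> \<odot>\<^bsub>M\<^esub> y" using \<open>n \<in> N\<close> NM P(2) by auto
    ultimately show "n \<in> N'" unfolding N'_def by blast
  qed
  have yN': "y \<in> N'"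
  proof -
    have "y = \<zero>\<^bsub>M\<^esub> \<oplus>\<^bsub>M\<^esub> \<one> \<odot>\<^bsub>M\<^esub> y" using P(2) by auto
    moreover have "\<zero>\<^bsub>M\<^esub> \<in> N" using N unfolding subm_def by auto
    ultimately show ?thesis unfolding N'_def by blast
  qed
  have "N' \<notin> Fam"
  proof
    assume "N' \<in> Fam"
    then have "N' = N" using Nmax NN' by auto
    then show False using yN yN' by auto
  qed
  then have finN': "finite (AssN N')" unfolding Fam_def using N'sm by auto
  have claim1: "colon R M N z' = P" if z': "z' \<in> N'" and pr: "primeideal (colon R M N z') R" for z'
  proof -
    obtain n r where nr: "z' = n \<oplus>\<^bsub>M\<^esub> r \<odot>\<^bsub>M\<^esub> y" "n \<in> N" "r \<in> carrier R"
      using z' unfolding N'_def by blast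
    have nM: "n \<in> carrier M" using nr NM by auto
    have mem: "a \<in> colon R M N z' \<longleftrightarrow> a \<otimes> r \<in> P" if a: "a \<in> carrier R" for a
    proof -
      have eq: "a \<odot>\<^bsub>M\<^esub> z' = a \<odot>\<^bsub>M\<^esub> n \<oplus>\<^bsub>M\<^esub> (a \<otimes> r) \<odot>\<^bsub>M\<^esub> y"
        using nr nM P(2) a by (simp add: smult_r_distr smult_assoc1)
      have an: "a \<odot>\<^bsub>M\<^esub> n \<in> N" using Nsm a nr by auto
      have "a \<odot>\<^bsub>M\<^esub> z' \<in> N \<longleftrightarrow> (a \<otimes> r) \<odot>\<^bsub>M\<^esub> y \<in> N"
      proof
        assume "a \<odot>\<^bsub>M\<^esub> z' \<in> N"
        then show "(a \<otimes> r) \<odot>\<^bsub>M\<^esub> y \<in> N" using subm_cancel[OF N an] eq a nr P(2) by auto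
      next
        assume "(a \<otimes> r) \<odot>\<^bsub>M\<^esub> y \<in> N"
        then show "a \<odot>\<^bsub>M\<^esub> z' \<in> N" using eq an Nadd by auto
      qed
      then show ?thesis unfolding colon_def P(3) using a nr by auto
    qed
    have rP: "r \<notin> P"
    proof
      assume "r \<in> P"
      then have "\<And>a. a \<in> carrier R \<Longrightarrow> a \<otimes> r \<in> P"
        using P(1) ideal.I_l_closed primeideal.axioms(1) by metis
      then have "colon R M N z' = carrier R" using mem unfolding colon_def by auto
      then show False using prime_colon_carrier pr by auto
    qed
    show ?thesis
    proof
      show "colon R M N z' \<subseteq> P"
      proof
        fix a assume a: "a \<in> colon R M N z'"
        then have aR: "a \<in> carrier R" unfolding colon_def by auto
        then have "a \<otimes> r \<in> P" using mem a by auto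
        then show "a \<in> P" using primeideal.I_prime[OF P(1) aR nr(3)] rP by auto
      qed
      show "P \<subseteq> colon R M N z'"
      proof
        fix a assume a: "a \<in> P"
        then have aR: "a \<in> carrier R" using PR by auto
        have "a \<otimes> r \<in> P" using a nr P(1) ideal.I_r_closed primeideal.axioms(1) by metis
        then show "a \<in> colon R M N z'" using mem aR by auto
      qed
    qed
  qed
  have "AssN N \<subseteq> AssN N' \<union> {P}"
  proof
    fix Q assume "Q \<in> AssN N"
    then obtain z where Q: "primeideal Q R" "z \<in> carrier M" "Q = colon R M N z" unfolding AssN_def by auto
    have QR: "Q \<subseteq> carrier R" unfolding Q(3) colon_def by auto
    show "Q \<in> AssN N' \<union> {P}"
    proof (cases "z \<in> N'")
      case True
      then show ?thesis using claim1 Q by auto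
    next
      case False
      have sub: "Q \<subseteq> colon R M N' z" unfolding Q(3) colon_def using NN' by auto
      show ?thesis
      proof (cases "colon R M N' z = Q")
        case True
        then show ?thesis unfolding AssN_def using Q by auto
      next
        case False
        then obtain b where b: "b \<in> colon R M N' z" "b \<notin> Q" using sub by auto
        have bR: "b \<in> carrier R" using b unfolding colon_def by auto
        have bz: "b \<odot>\<^bsub>M\<^esub> z \<in> N'" using b unfolding colon_def by auto
        have "colon R M N (b \<odot>\<^bsub>M\<^esub> z) = Q"
        proof
          show "colon R M N (b \<odot>\<^bsub>M\<^esub> z) \<subseteq> Q"
          proof
            fix a assume "a \<in> colon R M N (b \<odot>\<^bsub>M\<^esub> z)"
            then have a: "a \<in> carrier R" "(a \<otimes> b) \<odot>\<^bsub>M\<^esub> z \<in> N" unfolding colon_def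
              using bR Q(2) by (auto simp: smult_assoc1)
            then have "a \<otimes> b \<in> Q" unfolding Q(3) colon_def using bR by auto
            then show "a \<in> Q" using primeideal.I_prime[OF Q(1) a(1) bR] b by auto
          qed
          show "Q \<subseteq> colon R M N (b \<odot>\<^bsub>M\<^esub> z)"
          proof
            fix a assume a: "a \<in> Q"
            then have aR: "a \<in> carrier R" using QR by auto
            have "b \<odot>\<^bsub>M\<^esub> (a \<odot>\<^bsub>M\<^esub> z) \<in> N" using a Nsm bR unfolding Q(3) colon_def by auto
            then have "a \<odot>\<^bsub>M\<^esub> (b \<odot>\<^bsub>M\<^esub> z) \<in> N" using aR bR Q(2)
              by (simp add: smult_assoc1[symmetric] m_comm)
            then show "a \<in> colon R M N (b \<odot>\<^bsub>M\<^esub> z)" unfolding colon_def using aR by auto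
          qed
        qed
        then have "Q = P" using claim1[OF bz] Q(1) by auto
        then show ?thesis by auto
      qed
    qed
  qed
  then have "finite (AssN N)" using finN' finite_subset by auto
  then show False using inf by simp
qed

lemma scale_eq:
  assumes "c \<odot>\<^bsub>M\<^esub> xx = d \<odot>\<^bsub>M\<^esub> yy" "e \<in> carrier R" "c \<in> carrier R" "d \<in> carrier R"
    "xx \<in> carrier M" "yy \<in> carrier M"
  shows "(e \<otimes> c) \<odot>\<^bsub>M\<^esub> xx = (e \<otimes> d) \<odot>\<^bsub>M\<^esub> yy"
  using assms by (simp add: smult_assoc1)

lemma prime_mset:
  assumes "primeideal P R" shows "mset R (carrier R - P)"
proof -
  have "\<one> \<notin> P" using assms ideal.one_imp_carrier prime_colon_carrier primeideal.axioms(1) by metis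
  moreover have "a \<otimes> b \<notin> P" if "a \<in> carrier R - P" "b \<in> carrier R - P" for a b
    using that primeideal.I_prime[OF assms] by auto
  ultimately show ?thesis unfolding mset_def by auto
qed

lemma loc_rel_iff:
  "((x, t), (x', t')) \<in> loc_rel R M S \<longleftrightarrow> x \<in> carrier M \<and> t \<in> S \<and> x' \<in> carrier M \<and> t' \<in> S \<and>
     (\<exists>u\<in>S. (u \<otimes> t') \<odot>\<^bsub>M\<^esub> x = (u \<otimes> t) \<odot>\<^bsub>M\<^esub> x')" if "S \<subseteq> carrier R"
proof -
  have "u \<odot>\<^bsub>M\<^esub> ((t' \<odot>\<^bsub>M\<^esub> x) \<ominus>\<^bsub>M\<^esub> (t \<odot>\<^bsub>M\<^esub> x')) = \<zero>\<^bsub>M\<^esub> \<longleftrightarrow> (u \<otimes> t') \<odot>\<^bsub>M\<^esub> x = (u \<otimes> t) \<odot>\<^bsub>M\<^esub> x'"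
    if "u \<in> S" "t \<in> S" "t' \<in> S" "x \<in> carrier M" "x' \<in> carrier M" for u
  proof -
    have R: "u \<in> carrier R" "t \<in> carrier R" "t' \<in> carrier R" using that \<open>S \<subseteq> carrier R\<close> by auto
    have "(u \<odot>\<^bsub>M\<^esub> ((t' \<odot>\<^bsub>M\<^esub> x) \<ominus>\<^bsub>M\<^esub> (t \<odot>\<^bsub>M\<^esub> x')) = \<zero>\<^bsub>M\<^esub>) = (u \<odot>\<^bsub>M\<^esub> (t' \<odot>\<^bsub>M\<^esub> x) = u \<odot>\<^bsub>M\<^esub> (t \<odot>\<^bsub>M\<^esub> x'))"
      by (rule smult_diff_eq) (use R that in auto)
    also have "\<dots> = ((u \<otimes> t') \<odot>\<^bsub>M\<^esub> x = (u \<otimes> t) \<odot>\<^bsub>M\<^esub> x')" using R that by (simp add: smult_assoc1)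
    finally show ?thesis .
  qed
  then show ?thesis unfolding loc_rel_def by auto
qed

lemma loc_rel_equiv:
  assumes "mset R S"
  shows "equiv (carrier M \<times> S) (loc_rel R M S)"
proof -
  have SR: "S \<subseteq> carrier R" and one: "\<one> \<in> S" and Sm: "\<And>a b. a \<in> S \<Longrightarrow> b \<in> S \<Longrightarrow> a \<otimes> b \<in> S"
    using assms unfolding mset_def by auto
  note iff = loc_rel_iff[OF SR]
  show ?thesis
  proof (rule equivI)
    show "loc_rel R M S \<subseteq> (carrier M \<times> S) \<times> carrier M \<times> S" unfolding loc_rel_def by auto
    show "refl_on (carrier M \<times> S) (loc_rel R M S)"
    proof (rule refl_onI)
      fix z assume "z \<in> carrier M \<times> S"
      then show "(z, z) \<in> loc_rel R M S" using iff one by (cases z) auto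
    qed
    show "sym (loc_rel R M S)"
    proof (rule symI)
      fix a b assume "(a, b) \<in> loc_rel R M S"
      moreover obtain x1 t1 x2 t2 where abc: "a = (x1, t1)" "b = (x2, t2)" by (cases a, cases b) auto
      ultimately obtain u where "u \<in> S" "(u \<otimes> t2) \<odot>\<^bsub>M\<^esub> x1 = (u \<otimes> t1) \<odot>\<^bsub>M\<^esub> x2"
        "x1 \<in> carrier M" "t1 \<in> S" "x2 \<in> carrier M" "t2 \<in> S" using iff by auto
      then show "(b, a) \<in> loc_rel R M S" using iff abc by (metis (no_types, lifting))
    qed
    show "trans (loc_rel R M S)"
    proof (rule transI)
      fix a b c assume ab: "(a, b) \<in> loc_rel R M S" and bc: "(b, c) \<in> loc_rel R M S"
      obtain x1 t1 x2 t2 x3 t3 where abc: "a = (x1, t1)" "b = (x2, t2)" "c = (x3, t3)" by (cases a, cases b, cases c) auto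
      obtain u1 where u1: "u1 \<in> S" "(u1 \<otimes> t2) \<odot>\<^bsub>M\<^esub> x1 = (u1 \<otimes> t1) \<odot>\<^bsub>M\<^esub> x2"
        and h1: "x1 \<in> carrier M" "t1 \<in> S" "x2 \<in> carrier M" "t2 \<in> S"
        using ab abc iff by auto
      obtain u2 where u2: "u2 \<in> S" "(u2 \<otimes> t3) \<odot>\<^bsub>M\<^esub> x2 = (u2 \<otimes> t2) \<odot>\<^bsub>M\<^esub> x3"
        and h2: "x3 \<in> carrier M" "t3 \<in> S"
        using bc abc iff by auto
      have R: "u1 \<in> carrier R" "u2 \<in> carrier R" "t1 \<in> carrier R" "t2 \<in> carrier R" "t3 \<in> carrier R"
        using u1 u2 h1 h2 SR by auto
      have "((u1 \<otimes> u2 \<otimes> t2) \<otimes> t3) \<odot>\<^bsub>M\<^esub> x1 = ((u2 \<otimes> t3) \<otimes> (u1 \<otimes> t2)) \<odot>\<^bsub>M\<^esub> x1"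
        using R by (simp add: m_ac)
      also have "\<dots> = ((u2 \<otimes> t3) \<otimes> (u1 \<otimes> t1)) \<odot>\<^bsub>M\<^esub> x2"
        using scale_eq[OF u1(2), of "u2 \<otimes> t3"] R h1 by simp
      also have "\<dots> = ((u1 \<otimes> t1) \<otimes> (u2 \<otimes> t3)) \<odot>\<^bsub>M\<^esub> x2"
        using R by (simp add: m_ac)
      also have "\<dots> = ((u1 \<otimes> t1) \<otimes> (u2 \<otimes> t2)) \<odot>\<^bsub>M\<^esub> x3"
        using scale_eq[OF u2(2), of "u1 \<otimes> t1"] R h1 h2 by simp
      also have "\<dots> = ((u1 \<otimes> u2 \<otimes> t2) \<otimes> t1) \<odot>\<^bsub>M\<^esub> x3"
        using R by (simp add: m_ac)
      finally have "((u1 \<otimes> u2 \<otimes> t2) \<otimes> t3) \<odot>\<^bsub>M\<^esub> x1 = ((u1 \<otimes> u2 \<otimes> t2) \<otimes> t1) \<odot>\<^bsub>M\<^esub> x3" .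
      moreover have "u1 \<otimes> u2 \<otimes> t2 \<in> S" using Sm u1 u2 h1 by auto
      ultimately show "(a, c) \<in> loc_rel R M S" using iff abc h1 h2 by auto
    qed
  qed
qed

lemma loc_rel_mono: "A \<subseteq> B \<Longrightarrow> loc_rel R M A \<subseteq> loc_rel R M B"
  unfolding loc_rel_def by blast

lemma proper_in_prime:
  assumes noeth: "noetherian_ring R" and I: "ideal I R" and one: "\<one> \<notin> I"
  shows "\<exists>P. primeideal P R \<and> I \<subseteq> P"
proof -
  define Fam where "Fam = {J. ideal J R \<and> I \<subseteq> J \<and> \<one> \<notin> J}"
  have "I \<in> Fam" unfolding Fam_def using I one by auto
  then have ne: "Fam \<noteq> {}" by auto
  have idl: "\<And>J. J \<in> Fam \<Longrightarrow> ideal J R" unfolding Fam_def by auto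
  obtain J where J: "J \<in> Fam" and Jmax: "\<And>J'. J' \<in> Fam \<Longrightarrow> J \<subseteq> J' \<Longrightarrow> J' = J"
    using noeth_max[OF noeth ne idl] by metis
  have "maximalideal J R"
  proof (rule maximalidealI)
    show "ideal J R" using J unfolding Fam_def by auto
    show "carrier R \<noteq> J" using J unfolding Fam_def by auto
    fix J' assume J': "ideal J' R" "J \<subseteq> J'" "J' \<subseteq> carrier R"
    show "J' = J \<or> J' = carrier R"
    proof (cases "\<one> \<in> J'")
      case True
      then show ?thesis using ideal.one_imp_carrier[OF J'(1)] by auto
    next
      case False
      then have "J' \<in> Fam" using J J' unfolding Fam_def by auto
      then show ?thesis using Jmax J' by auto
    qed
  qed
  then have "primeideal J R" by (rule maximalideal_prime)
  then show ?thesis using J unfolding Fam_def by auto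
qed

lemma IL:
  assumes noeth: "noetherian_ring R" and p: "primeideal p R" and y: "y1 \<in> carrier M" "y2 \<in> carrier M"
    and H: "\<And>Q z. primeideal Q R \<Longrightarrow> z \<in> carrier M \<Longrightarrow> Q = colon R M {\<zero>\<^bsub>M\<^esub>} z \<Longrightarrow> Q \<subseteq> p
              \<Longrightarrow> \<exists>u\<in>carrier R - Q. u \<odot>\<^bsub>M\<^esub> y1 = u \<odot>\<^bsub>M\<^esub> y2"
  shows "\<exists>u\<in>carrier R - p. u \<odot>\<^bsub>M\<^esub> y1 = u \<odot>\<^bsub>M\<^esub> y2"
proof (rule ccontr)
  assume nex: "\<not> ?thesis"
  define y where "y = y1 \<ominus>\<^bsub>M\<^esub> y2"
  have yM: "y \<in> carrier M" unfolding y_def using y by auto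
  have eq: "\<And>u. u \<in> carrier R \<Longrightarrow> u \<odot>\<^bsub>M\<^esub> y = \<zero>\<^bsub>M\<^esub> \<longleftrightarrow> u \<odot>\<^bsub>M\<^esub> y1 = u \<odot>\<^bsub>M\<^esub> y2"
    unfolding y_def using smult_diff_eq y by auto
  have "colon R M {\<zero>\<^bsub>M\<^esub>} y \<inter> (carrier R - p) = {}"
    using nex eq unfolding colon_def by auto
  then obtain Q z where Q: "primeideal Q R" "Q \<inter> (carrier R - p) = {}" "z \<in> carrier M"
    "Q = colon R M {\<zero>\<^bsub>M\<^esub>} z" "\<forall>u\<in>carrier R - Q. u \<odot>\<^bsub>M\<^esub> y \<notin> {\<zero>\<^bsub>M\<^esub>}"
    using max_colon_prime[OF noeth subm_zero prime_mset[OF p] yM \<open>colon R M {\<zero>\<^bsub>M\<^esub>} y \<inter> (carrier R - p) = {}\<close>] by metis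
  have "Q \<subseteq> p" using Q(2,4) unfolding colon_def by auto
  then obtain u where "u \<in> carrier R - Q" "u \<odot>\<^bsub>M\<^esub> y1 = u \<odot>\<^bsub>M\<^esub> y2" using H[OF Q(1) Q(3) Q(4)] by blast
  then show False using Q(5) eq by auto
qed


lemma main_lemma:
  fixes s
  assumes "noetherian_ring R" and "fin_gen_module R M"
    and "\<And>P. primeideal P R \<Longrightarrow> s P \<in> localization R M P"
    and "\<And>P Q. primeideal P R \<Longrightarrow> primeideal Q R \<Longrightarrow> P \<subseteq> Q \<Longrightarrow> s P = loc_restrict R M P (s Q)"
  shows "\<exists>!v. v \<in> carrier M \<and> (\<forall>P. primeideal P R \<longrightarrow> loc_map R M P v = s P)"
proof -
  note noeth = assms(1)
  define S where "S P = carrier R - P" for P :: "'a set"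
  define rel where "rel P = loc_rel R M (S P)" for P
  have SR: "\<And>P. S P \<subseteq> carrier R" unfolding S_def by auto
  have eqv: "equiv (carrier M \<times> S P) (rel P)" if "primeideal P R" for P
    unfolding rel_def S_def by (rule loc_rel_equiv[OF prime_mset[OF that]])
  have iff: "\<And>P x t x' t'. ((x, t), (x', t')) \<in> rel P \<longleftrightarrow> x \<in> carrier M \<and> t \<in> S P \<and> x' \<in> carrier M \<and> t' \<in> S P \<and>
     (\<exists>u\<in>S P. (u \<otimes> t') \<odot>\<^bsub>M\<^esub> x = (u \<otimes> t) \<odot>\<^bsub>M\<^esub> x')"
    unfolding rel_def by (rule loc_rel_iff[OF SR])
  have "\<forall>P. \<exists>z. primeideal P R \<longrightarrow> z \<in> carrier M \<times> S P \<and> s P = rel P `` {z}"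
  proof
    fix P show "\<exists>z. primeideal P R \<longrightarrow> z \<in> carrier M \<times> S P \<and> s P = rel P `` {z}"
    proof (cases "primeideal P R")
      case True
      then have "s P \<in> (carrier M \<times> S P) // rel P" using assms(3) unfolding localization_def rel_def S_def by simp
      then show ?thesis unfolding quotient_def by blast
    qed simp
  qed
  from choice[OF this] obtain zf where zf0: "\<forall>P. primeideal P R \<longrightarrow> zf P \<in> carrier M \<times> S P \<and> s P = rel P `` {zf P}"
    by blast
  then have zf: "\<And>P. primeideal P R \<Longrightarrow> zf P \<in> carrier M \<times> S P \<and> s P = rel P `` {zf P}" by blast
  define xs where "xs P = fst (zf P)" for P
  define ts where "ts P = snd (zf P)" for P
  have rep: "xs P \<in> carrier M \<and> ts P \<in> S P \<and> s P = rel P `` {(xs P, ts P)}" if P: "primeideal P R" for P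
  proof -
    have "zf P \<in> carrier M \<times> S P" "s P = rel P `` {zf P}" using zf[OF P] by auto
    then show ?thesis unfolding xs_def ts_def by (cases "zf P") auto
  qed
  have tsR: "\<And>P. primeideal P R \<Longrightarrow> ts P \<in> carrier R" using rep SR by (meson subsetD)
  have compat: "((xs P, ts P), (xs Q, ts Q)) \<in> rel P"
    if P: "primeideal P R" and Q: "primeideal Q R" and PQ: "P \<subseteq> Q" for P Q
  proof -
    have zP: "(xs P, ts P) \<in> s P" using rep[OF P] equiv_class_self[OF eqv[OF P], of "(xs P, ts P)"] by auto
    have "s P = rel P `` (rel Q `` {(xs Q, ts Q)})"
      using assms(4)[OF P Q PQ] rep[OF Q] unfolding loc_restrict_def rel_def S_def by simp
    then obtain w where w1: "((xs Q, ts Q), w) \<in> rel Q" and w2: "(w, (xs P, ts P)) \<in> rel P" using zP by blast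
    have "S Q \<subseteq> S P" unfolding S_def using PQ by auto
    then have "rel Q \<subseteq> rel P" unfolding rel_def by (rule loc_rel_mono)
    then have "((xs Q, ts Q), w) \<in> rel P" using w1 by auto
    have tr: "trans (rel P)" and sy: "sym (rel P)" using eqv[OF P] unfolding equiv_def by auto
    have "((xs Q, ts Q), (xs P, ts P)) \<in> rel P" using transD[OF tr \<open>((xs Q, ts Q), w) \<in> rel P\<close> w2] .
    then show ?thesis using symD[OF sy] by blast
  qed
  have locmap: "loc_map R M P v = rel P `` {(v, \<one>)}" for P v unfolding loc_map_def rel_def S_def by simp
  have one_S: "\<one> \<in> S P" if "primeideal P R" for P using prime_mset[OF that] unfolding S_def mset_def by blast
  have Sm: "a \<otimes> b \<in> S P" if "primeideal P R" "a \<in> S P" "b \<in> S P" for P a b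
    using prime_mset[OF that(1)] that(2,3) unfolding S_def mset_def by blast
  have uniq: "v = w" if v: "v \<in> carrier M \<and> (\<forall>P. primeideal P R \<longrightarrow> loc_map R M P v = s P)"
    and w: "w \<in> carrier M \<and> (\<forall>P. primeideal P R \<longrightarrow> loc_map R M P w = s P)" for v w
  proof -
    have vM: "v \<in> carrier M" and wM: "w \<in> carrier M" using v w by auto
    have loc: "\<exists>u\<in>S P. u \<odot>\<^bsub>M\<^esub> v = u \<odot>\<^bsub>M\<^esub> w" if P: "primeideal P R" for P
    proof -
      have "loc_map R M P v = loc_map R M P w" using v w P by simp
      then have "rel P `` {(v, \<one>)} = rel P `` {(w, \<one>)}" unfolding locmap .
      then have "((v, \<one>), (w, \<one>)) \<in> rel P"
        using eq_equiv_class_iff[OF eqv[OF P], of "(v, \<one>)" "(w, \<one>)"] vM wM one_S[OF P] by simp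
      then obtain u where "u \<in> S P" "(u \<otimes> \<one>) \<odot>\<^bsub>M\<^esub> v = (u \<otimes> \<one>) \<odot>\<^bsub>M\<^esub> w" using iff by blast
      moreover have "u \<in> carrier R" using \<open>u \<in> S P\<close> SR by blast
      ultimately show ?thesis by (intro bexI[of _ u]) auto
    qed
    define I where "I = colon R M {\<zero>\<^bsub>M\<^esub>} (v \<ominus>\<^bsub>M\<^esub> w)"
    have Iid: "ideal I R" unfolding I_def using colon_ideal[OF subm_zero] vM wM by auto
    have memI: "\<And>u. u \<in> carrier R \<Longrightarrow> u \<in> I \<longleftrightarrow> u \<odot>\<^bsub>M\<^esub> v = u \<odot>\<^bsub>M\<^esub> w"
      unfolding I_def colon_def using smult_diff_eq vM wM by auto
    show ?thesis
    proof (cases "\<one> \<in> I")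
      case True
      then show ?thesis using memI[of \<one>] vM wM by simp
    next
      case False
      then obtain P where P: "primeideal P R" "I \<subseteq> P" using proper_in_prime[OF noeth Iid] by blast
      obtain u where "u \<in> S P" "u \<odot>\<^bsub>M\<^esub> v = u \<odot>\<^bsub>M\<^esub> w" using loc[OF P(1)] by blast
      then have "u \<in> I" "u \<notin> P" using memI unfolding S_def by auto
      then show ?thesis using P by auto
    qed
  qed
  define J where "J = {a \<in> carrier R. \<exists>v\<in>carrier M. \<forall>p. primeideal p R \<longrightarrow>
      (\<exists>u\<in>S p. (u \<otimes> a) \<odot>\<^bsub>M\<^esub> xs p = (u \<otimes> ts p) \<odot>\<^bsub>M\<^esub> v)}"
  have Jid: "ideal J R"
  proof (rule my_idealI)
    show "J \<subseteq> carrier R" unfolding J_def by auto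
    have "\<forall>p. primeideal p R \<longrightarrow> (\<exists>u\<in>S p. (u \<otimes> \<zero>) \<odot>\<^bsub>M\<^esub> xs p = (u \<otimes> ts p) \<odot>\<^bsub>M\<^esub> \<zero>\<^bsub>M\<^esub>)"
    proof (intro allI impI)
      fix p assume p: "primeideal p R"
      show "\<exists>u\<in>S p. (u \<otimes> \<zero>) \<odot>\<^bsub>M\<^esub> xs p = (u \<otimes> ts p) \<odot>\<^bsub>M\<^esub> \<zero>\<^bsub>M\<^esub>"
        using one_S[OF p] rep[OF p] tsR[OF p] by (intro bexI[of _ \<one>]) auto
    qed
    then show "\<zero> \<in> J" unfolding J_def by auto
  next
    fix a b assume "a \<in> J" "b \<in> J"
    then obtain va vb where a: "a \<in> carrier R" "va \<in> carrier M"
      "\<And>p. primeideal p R \<Longrightarrow> \<exists>u\<in>S p. (u \<otimes> a) \<odot>\<^bsub>M\<^esub> xs p = (u \<otimes> ts p) \<odot>\<^bsub>M\<^esub> va"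
      and b: "b \<in> carrier R" "vb \<in> carrier M"
      "\<And>p. primeideal p R \<Longrightarrow> \<exists>u\<in>S p. (u \<otimes> b) \<odot>\<^bsub>M\<^esub> xs p = (u \<otimes> ts p) \<odot>\<^bsub>M\<^esub> vb"
      unfolding J_def by blast
    have "\<exists>u\<in>S p. (u \<otimes> (a \<oplus> b)) \<odot>\<^bsub>M\<^esub> xs p = (u \<otimes> ts p) \<odot>\<^bsub>M\<^esub> (va \<oplus>\<^bsub>M\<^esub> vb)"
      if p: "primeideal p R" for p
    proof -
      obtain ua where ua: "ua \<in> S p" "(ua \<otimes> a) \<odot>\<^bsub>M\<^esub> xs p = (ua \<otimes> ts p) \<odot>\<^bsub>M\<^esub> va" using a(3)[OF p] by blast
      obtain ub where ub: "ub \<in> S p" "(ub \<otimes> b) \<odot>\<^bsub>M\<^esub> xs p = (ub \<otimes> ts p) \<odot>\<^bsub>M\<^esub> vb" using b(3)[OF p] by blast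
      have RR: "ua \<in> carrier R" "ub \<in> carrier R" "ts p \<in> carrier R" using ua ub SR tsR[OF p] by auto
      have x: "xs p \<in> carrier M" using rep[OF p] by auto
      have "((ua \<otimes> ub) \<otimes> (a \<oplus> b)) \<odot>\<^bsub>M\<^esub> xs p = (ub \<otimes> (ua \<otimes> a) \<oplus> ua \<otimes> (ub \<otimes> b)) \<odot>\<^bsub>M\<^esub> xs p"
        using RR a b by (simp add: r_distr m_ac)
      also have "\<dots> = (ub \<otimes> (ua \<otimes> a)) \<odot>\<^bsub>M\<^esub> xs p \<oplus>\<^bsub>M\<^esub> (ua \<otimes> (ub \<otimes> b)) \<odot>\<^bsub>M\<^esub> xs p"
        using RR a b x by (simp add: smult_l_distr)
      also have "\<dots> = (ub \<otimes> (ua \<otimes> ts p)) \<odot>\<^bsub>M\<^esub> va \<oplus>\<^bsub>M\<^esub> (ua \<otimes> (ub \<otimes> ts p)) \<odot>\<^bsub>M\<^esub> vb"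
        using scale_eq[OF ua(2), of ub] scale_eq[OF ub(2), of ua] RR a b x by simp
      also have "\<dots> = ((ua \<otimes> ub) \<otimes> ts p) \<odot>\<^bsub>M\<^esub> (va \<oplus>\<^bsub>M\<^esub> vb)"
        using RR a b by (simp add: smult_r_distr m_ac)
      finally show ?thesis using Sm[OF p ua(1) ub(1)] by blast
    qed
    then show "a \<oplus> b \<in> J" unfolding J_def using a b by blast
  next
    fix r a assume r: "r \<in> carrier R" and "a \<in> J"
    then obtain va where a: "a \<in> carrier R" "va \<in> carrier M"
      "\<And>p. primeideal p R \<Longrightarrow> \<exists>u\<in>S p. (u \<otimes> a) \<odot>\<^bsub>M\<^esub> xs p = (u \<otimes> ts p) \<odot>\<^bsub>M\<^esub> va"
      unfolding J_def by blast
    have "\<exists>u\<in>S p. (u \<otimes> (r \<otimes> a)) \<odot>\<^bsub>M\<^esub> xs p = (u \<otimes> ts p) \<odot>\<^bsub>M\<^esub> (r \<odot>\<^bsub>M\<^esub> va)"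
      if p: "primeideal p R" for p
    proof -
      obtain ua where ua: "ua \<in> S p" "(ua \<otimes> a) \<odot>\<^bsub>M\<^esub> xs p = (ua \<otimes> ts p) \<odot>\<^bsub>M\<^esub> va" using a(3)[OF p] by blast
      have RR: "ua \<in> carrier R" "ts p \<in> carrier R" using ua SR tsR[OF p] by auto
      have x: "xs p \<in> carrier M" using rep[OF p] by auto
      have "(ua \<otimes> (r \<otimes> a)) \<odot>\<^bsub>M\<^esub> xs p = (r \<otimes> (ua \<otimes> a)) \<odot>\<^bsub>M\<^esub> xs p"
        using RR a r by (simp add: m_ac)
      also have "\<dots> = (r \<otimes> (ua \<otimes> ts p)) \<odot>\<^bsub>M\<^esub> va"
        using scale_eq[OF ua(2), of r] RR a r x by simp
      also have "\<dots> = (ua \<otimes> ts p) \<odot>\<^bsub>M\<^esub> (r \<odot>\<^bsub>M\<^esub> va)"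
        using RR a r by (simp add: smult_assoc1[symmetric] m_ac)
      finally show ?thesis using ua(1) by blast
    qed
    then show "r \<otimes> a \<in> J" unfolding J_def using a r by blast
  qed
  have oneJ: "\<one> \<in> J"
  proof (rule ccontr)
    assume "\<one> \<notin> J"
    then obtain m where m: "primeideal m R" "J \<subseteq> m" using proper_in_prime[OF noeth Jid] by blast
    define x where "x = xs m"
    define t where "t = ts m"
    have xM: "x \<in> carrier M" and tS: "t \<in> S m" and tR: "t \<in> carrier R"
      using rep[OF m(1)] tsR[OF m(1)] unfolding x_def t_def by auto
    define Ass where "Ass = {Q. primeideal Q R \<and> (\<exists>z\<in>carrier M. Q = colon R M {\<zero>\<^bsub>M\<^esub>} z)}"
    have finAss: "finite Ass" unfolding Ass_def using ass_finite_gen[OF noeth assms(2) subm_zero] .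
    define Gd where "Gd b P \<longleftrightarrow> (\<exists>u\<in>S P. (u \<otimes> b \<otimes> t) \<odot>\<^bsub>M\<^esub> xs P = (u \<otimes> b \<otimes> ts P) \<odot>\<^bsub>M\<^esub> x)" for b P
    have claim2: "\<exists>b\<in>S m. Gd b P" if PA: "P \<in> Ass" for P
    proof (rule ccontr)
      assume nG: "\<not> (\<exists>b\<in>S m. Gd b P)"
      have P: "primeideal P R" using PA unfolding Ass_def by auto
      have xP: "xs P \<in> carrier M" and tP: "ts P \<in> carrier R" using rep[OF P] tsR[OF P] by auto
      define T where "T = {a \<otimes> c | a c. a \<in> S P \<and> c \<in> S m}"
      have T: "mset R T"
      proof -
        have "T \<subseteq> carrier R" unfolding T_def using SR by blast
        moreover have "\<one> \<in> T" unfolding T_def using one_S[OF P] one_S[OF m(1)] by force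
        moreover have "a \<otimes> b \<in> T" if hT: "a \<in> T" "b \<in> T" for a b
        proof -
          obtain a1 c1 a2 c2 where h: "a = a1 \<otimes> c1" "b = a2 \<otimes> c2" "a1 \<in> S P" "c1 \<in> S m" "a2 \<in> S P" "c2 \<in> S m"
            using hT unfolding T_def by blast
          have RR: "a1 \<in> carrier R" "c1 \<in> carrier R" "a2 \<in> carrier R" "c2 \<in> carrier R" using h SR by blast+
          have "a \<otimes> b = (a1 \<otimes> a2) \<otimes> (c1 \<otimes> c2)" using h RR by (simp add: m_ac)
          then show ?thesis unfolding T_def using Sm[OF P h(3) h(5)] Sm[OF m(1) h(4) h(6)] by blast
        qed
        ultimately show ?thesis unfolding mset_def by blast
      qed
      define y1 where "y1 = t \<odot>\<^bsub>M\<^esub> xs P"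
      define y2 where "y2 = ts P \<odot>\<^bsub>M\<^esub> x"
      define y where "y = y1 \<ominus>\<^bsub>M\<^esub> y2"
      have yM: "y1 \<in> carrier M" "y2 \<in> carrier M" "y \<in> carrier M" unfolding y_def y1_def y2_def using xP tP tR xM by auto
      have yeq: "\<And>u. u \<in> carrier R \<Longrightarrow> u \<odot>\<^bsub>M\<^esub> y = \<zero>\<^bsub>M\<^esub> \<longleftrightarrow> u \<odot>\<^bsub>M\<^esub> y1 = u \<odot>\<^bsub>M\<^esub> y2"
        unfolding y_def using smult_diff_eq yM by auto
      have "colon R M {\<zero>\<^bsub>M\<^esub>} y \<inter> T = {}"
      proof (rule ccontr)
        assume "colon R M {\<zero>\<^bsub>M\<^esub>} y \<inter> T \<noteq> {}"
        then obtain a c where ac: "a \<in> S P" "c \<in> S m" "(a \<otimes> c) \<odot>\<^bsub>M\<^esub> y = \<zero>\<^bsub>M\<^esub>"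
          unfolding T_def colon_def by blast
        have RR: "a \<in> carrier R" "c \<in> carrier R" using ac SR by blast+
        then have "(a \<otimes> c) \<odot>\<^bsub>M\<^esub> y1 = (a \<otimes> c) \<odot>\<^bsub>M\<^esub> y2" using yeq ac by auto
        then have "(a \<otimes> c \<otimes> t) \<odot>\<^bsub>M\<^esub> xs P = (a \<otimes> c \<otimes> ts P) \<odot>\<^bsub>M\<^esub> x"
          unfolding y1_def y2_def using RR tR tP xP xM by (simp add: smult_assoc1)
        then have "Gd c P" unfolding Gd_def using ac(1) by blast
        then show False using nG ac(2) by blast
      qed
      then obtain Q z where Q: "primeideal Q R" "Q \<inter> T = {}" "z \<in> carrier M"
        "Q = colon R M {\<zero>\<^bsub>M\<^esub>} z" "\<forall>u\<in>carrier R - Q. u \<odot>\<^bsub>M\<^esub> y \<notin> {\<zero>\<^bsub>M\<^esub>}"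
        using max_colon_prime[OF noeth subm_zero T yM(3)] by metis
      have QR: "Q \<subseteq> carrier R" unfolding Q(4) colon_def by auto
      have QP: "Q \<subseteq> P"
      proof
        fix q assume "q \<in> Q"
        show "q \<in> P"
        proof (rule ccontr)
          assume "q \<notin> P"
          then have "q \<otimes> \<one> \<in> T" unfolding T_def using \<open>q \<in> Q\<close> QR one_S[OF m(1)] S_def by blast
          then show False using Q(2) \<open>q \<in> Q\<close> subsetD[OF QR \<open>q \<in> Q\<close>] by auto
        qed
      qed
      have Qm: "Q \<subseteq> m"
      proof
        fix q assume "q \<in> Q"
        show "q \<in> m"
        proof (rule ccontr)
          assume "q \<notin> m"
          then have "\<one> \<otimes> q \<in> T" unfolding T_def using \<open>q \<in> Q\<close> QR one_S[OF P] S_def by blast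
          then show False using Q(2) \<open>q \<in> Q\<close> subsetD[OF QR \<open>q \<in> Q\<close>] by auto
        qed
      qed
      have c1: "((xs Q, ts Q), (xs P, ts P)) \<in> rel Q" using compat[OF Q(1) P QP] .
      have c2: "((xs Q, ts Q), (x, t)) \<in> rel Q" using compat[OF Q(1) m(1) Qm] unfolding x_def t_def .
      have tr: "trans (rel Q)" and sy: "sym (rel Q)" using eqv[OF Q(1)] unfolding equiv_def by auto
      have "((xs P, ts P), (x, t)) \<in> rel Q" using transD[OF tr symD[OF sy c1] c2] .
      then obtain u where u: "u \<in> S Q" "(u \<otimes> t) \<odot>\<^bsub>M\<^esub> xs P = (u \<otimes> ts P) \<odot>\<^bsub>M\<^esub> x" using iff by blast
      have uR: "u \<in> carrier R" using u SR by blast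
      have "u \<odot>\<^bsub>M\<^esub> y1 = u \<odot>\<^bsub>M\<^esub> y2" unfolding y1_def y2_def using u uR tR tP xP xM by (simp add: smult_assoc1)
      then have "u \<odot>\<^bsub>M\<^esub> y = \<zero>\<^bsub>M\<^esub>" using yeq uR by auto
      moreover have "u \<in> carrier R - Q" using u unfolding S_def by auto
      ultimately show False using Q(5) by auto
    qed
    have Gd_mult: "Gd (b \<otimes> c) P" if hG: "Gd b P" "b \<in> carrier R" "c \<in> carrier R" "primeideal P R" for b c P
    proof -
      obtain u where u: "u \<in> S P" "(u \<otimes> b \<otimes> t) \<odot>\<^bsub>M\<^esub> xs P = (u \<otimes> b \<otimes> ts P) \<odot>\<^bsub>M\<^esub> x"
        using hG(1) unfolding Gd_def by blast
      have RR: "u \<in> carrier R" "ts P \<in> carrier R" "xs P \<in> carrier M" using u SR tsR[OF hG(4)] rep[OF hG(4)] by auto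
      have "(c \<otimes> (u \<otimes> b \<otimes> t)) \<odot>\<^bsub>M\<^esub> xs P = (c \<otimes> (u \<otimes> b \<otimes> ts P)) \<odot>\<^bsub>M\<^esub> x"
        using scale_eq[OF u(2), of c] RR hG tR xM by simp
      then have "(u \<otimes> (b \<otimes> c) \<otimes> t) \<odot>\<^bsub>M\<^esub> xs P = (u \<otimes> (b \<otimes> c) \<otimes> ts P) \<odot>\<^bsub>M\<^esub> x"
        using RR hG tR by (simp add: m_ac)
      then show ?thesis unfolding Gd_def using u(1) by blast
    qed
    have fin: "F \<subseteq> Ass \<Longrightarrow> \<exists>b\<in>S m. \<forall>P\<in>F. Gd b P" if "finite F" for F
      using that
    proof (induction F rule: finite_induct)
      case empty
      then show ?case using one_S[OF m(1)] by blast
    next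
      case (insert P F)
      then obtain b where b: "b \<in> S m" "\<forall>P\<in>F. Gd b P" by blast
      obtain c where c: "c \<in> S m" "Gd c P" using claim2 insert by blast
      have RR: "b \<in> carrier R" "c \<in> carrier R" using b c SR by blast+
      have "\<forall>P'\<in>insert P F. Gd (b \<otimes> c) P'"
      proof
        fix P' assume "P' \<in> insert P F"
        then show "Gd (b \<otimes> c) P'"
        proof
          assume "P' = P"
          have "Gd (c \<otimes> b) P" using Gd_mult[OF c(2) RR(2) RR(1)] insert(4) unfolding Ass_def by blast
          then show ?thesis using \<open>P' = P\<close> RR by (simp add: m_comm)
        next
          assume "P' \<in> F"
          then show ?thesis using Gd_mult[OF _ RR] b insert(4) unfolding Ass_def by blast
        qed
      qed
      then show ?case using Sm[OF m(1) b(1) c(1)] by blast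
    qed
    obtain b where b: "b \<in> S m" "\<And>P. P \<in> Ass \<Longrightarrow> Gd b P" using fin[OF finAss] by blast
    have bR: "b \<in> carrier R" using b SR by blast
    have "b \<otimes> t \<in> J"
    proof -
      have "\<exists>u\<in>S p. (u \<otimes> (b \<otimes> t)) \<odot>\<^bsub>M\<^esub> xs p = (u \<otimes> ts p) \<odot>\<^bsub>M\<^esub> (b \<odot>\<^bsub>M\<^esub> x)"
        if p: "primeideal p R" for p
      proof -
        have xp: "xs p \<in> carrier M" and tp: "ts p \<in> carrier R" using rep[OF p] tsR[OF p] by auto
        define y1 where "y1 = (b \<otimes> t) \<odot>\<^bsub>M\<^esub> xs p"
        define y2 where "y2 = (ts p \<otimes> b) \<odot>\<^bsub>M\<^esub> x"
        have yM: "y1 \<in> carrier M" "y2 \<in> carrier M" unfolding y1_def y2_def using xp tp bR tR xM by auto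
        have "\<exists>u\<in>carrier R - p. u \<odot>\<^bsub>M\<^esub> y1 = u \<odot>\<^bsub>M\<^esub> y2"
        proof (rule IL[OF noeth p yM])
          fix Q z assume Q: "primeideal Q R" "z \<in> carrier M" "Q = colon R M {\<zero>\<^bsub>M\<^esub>} z" "Q \<subseteq> p"
          have "Q \<in> Ass" unfolding Ass_def using Q by auto
          then obtain u1 where u1: "u1 \<in> S Q" "(u1 \<otimes> b \<otimes> t) \<odot>\<^bsub>M\<^esub> xs Q = (u1 \<otimes> b \<otimes> ts Q) \<odot>\<^bsub>M\<^esub> x"
            using b(2) unfolding Gd_def by blast
          have "((xs Q, ts Q), (xs p, ts p)) \<in> rel Q" using compat[OF Q(1) p Q(4)] .
          then obtain u2 where u2: "u2 \<in> S Q" "(u2 \<otimes> ts p) \<odot>\<^bsub>M\<^esub> xs Q = (u2 \<otimes> ts Q) \<odot>\<^bsub>M\<^esub> xs p"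
            using iff by blast
          have RR: "u1 \<in> carrier R" "u2 \<in> carrier R" "ts Q \<in> carrier R" "xs Q \<in> carrier M"
            using u1 u2 SR tsR[OF Q(1)] rep[OF Q(1)] by auto
          define u where "u = u1 \<otimes> u2 \<otimes> ts Q"
          have uS: "u \<in> S Q" unfolding u_def using Sm[OF Q(1) Sm[OF Q(1) u1(1) u2(1)]] rep[OF Q(1)] by blast
          have "u \<odot>\<^bsub>M\<^esub> y1 = ((u1 \<otimes> b \<otimes> t) \<otimes> (u2 \<otimes> ts Q)) \<odot>\<^bsub>M\<^esub> xs p"
            unfolding y1_def u_def using RR bR tR xp by (simp add: smult_assoc1[symmetric] m_ac)
          also have "\<dots> = ((u1 \<otimes> b \<otimes> t) \<otimes> (u2 \<otimes> ts p)) \<odot>\<^bsub>M\<^esub> xs Q"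
            using scale_eq[OF u2(2)[symmetric], of "u1 \<otimes> b \<otimes> t"] RR bR tR xp tp by simp
          also have "\<dots> = ((u2 \<otimes> ts p) \<otimes> (u1 \<otimes> b \<otimes> t)) \<odot>\<^bsub>M\<^esub> xs Q"
            using RR bR tR tp by (simp add: m_comm)
          also have "\<dots> = ((u2 \<otimes> ts p) \<otimes> (u1 \<otimes> b \<otimes> ts Q)) \<odot>\<^bsub>M\<^esub> x"
            using scale_eq[OF u1(2), of "u2 \<otimes> ts p"] RR bR tR xp tp xM by simp
          also have "\<dots> = u \<odot>\<^bsub>M\<^esub> y2"
            unfolding y2_def u_def using RR bR tR tp xM by (simp add: smult_assoc1[symmetric] m_ac)
          finally show "\<exists>u\<in>carrier R - Q. u \<odot>\<^bsub>M\<^esub> y1 = u \<odot>\<^bsub>M\<^esub> y2" using uS unfolding S_def by blast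
        qed
        then obtain u where u: "u \<in> carrier R - p" "u \<odot>\<^bsub>M\<^esub> y1 = u \<odot>\<^bsub>M\<^esub> y2" by blast
        then have "(u \<otimes> (b \<otimes> t)) \<odot>\<^bsub>M\<^esub> xs p = (u \<otimes> ts p) \<odot>\<^bsub>M\<^esub> (b \<odot>\<^bsub>M\<^esub> x)"
          unfolding y1_def y2_def using bR tR tp xp xM by (simp add: smult_assoc1[symmetric] m_ac)
        then show ?thesis using u(1) unfolding S_def by blast
      qed
      moreover have "b \<odot>\<^bsub>M\<^esub> x \<in> carrier M" using bR xM by simp
      moreover have "b \<otimes> t \<in> carrier R" using bR tR by simp
      ultimately show ?thesis unfolding J_def by blast
    qed
    then have "b \<otimes> t \<in> m" using m(2) by blast
    then show False using primeideal.I_prime[OF m(1) bR tR] b(1) tS unfolding S_def by blast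
  qed
  then obtain v where vM: "v \<in> carrier M" and
    vp: "\<And>p. primeideal p R \<Longrightarrow> \<exists>u\<in>S p. (u \<otimes> \<one>) \<odot>\<^bsub>M\<^esub> xs p = (u \<otimes> ts p) \<odot>\<^bsub>M\<^esub> v"
    unfolding J_def by blast
  have ex: "v \<in> carrier M \<and> (\<forall>P. primeideal P R \<longrightarrow> loc_map R M P v = s P)"
  proof (intro conjI allI impI vM)
    fix P assume P: "primeideal P R"
    obtain u where u: "u \<in> S P" "(u \<otimes> \<one>) \<odot>\<^bsub>M\<^esub> xs P = (u \<otimes> ts P) \<odot>\<^bsub>M\<^esub> v" using vp[OF P] by blast
    have "((v, \<one>), (xs P, ts P)) \<in> rel P" using iff u rep[OF P] vM one_S[OF P] by (auto intro!: bexI[of _ u])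
    then have "rel P `` {(v, \<one>)} = rel P `` {(xs P, ts P)}" using equiv_class_eq[OF eqv[OF P]] by simp
    then show "loc_map R M P v = s P" using locmap rep[OF P] by simp
  qed
  show ?thesis by (rule ex1I[of _ v]) (use ex uniq in auto)
qed

end


theorem lemma7:
  fixes R :: "('a, 'r) ring_scheme" and M :: "('a, 'b, 'm) module_scheme"
    and s :: "'a set \<Rightarrow> ('b \<times> 'a) set"
  assumes "noetherian_ring R" and "cring R" and "module R M" and "fin_gen_module R M"
    and "\<And>P. primeideal P R \<Longrightarrow> s P \<in> localization R M P"
    and "\<And>P Q. primeideal P R \<Longrightarrow> primeideal Q R \<Longrightarrow> P \<subseteq> Q \<Longrightarrow> s P = loc_restrict R M P (s Q)"
  shows "\<exists>!v. v \<in> carrier M \<and> (\<forall>P. primeideal P R \<longrightarrow> loc_map R M P v = s P)"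
  using module.main_lemma[OF assms(3) assms(1) assms(4) assms(5) assms(6)] by blast

end
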